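(* Let $\Lambda$ be a split-by-nilpotent extension of a finite dimensional algebra $A$. Then the triangle functor $-\otimes_A\Lambda:K^b(\mathrm{proj}\,A)\to K^b(\mathrm{proj}\,\Lambda)$ sends indecomposable objects to indecomposable objects.
   Context: $\Lambda$ is a split-by-nilpotent extension of $A$: there is a surjective algebra homomorphism $\pi:\Lambda\to A$ with nilpotent kernel and an algebra homomorphism $\iota:A\to\Lambda$ with $\pi\circ\iota=\mathrm{id}_A$; $\Lambda$ is a left $A$-module via $\iota$ and $A$ a left $\Lambda$-module via $\pi$. $K^b(\mathrm{proj}\,B)$ is the bounded homotopy category of finitely generated projective right $B$-modules. *)

theory Defs
  imports Main "Jordan_Normal_Form.Matrix"
begin

definition fd_algebra :: "('k::field \<Rightarrow> 'a::ring_1 \<Rightarrow> 'a) \<Rightarrow> bool" where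
  "fd_algebra s \<longleftrightarrow> vector_space s
     \<and> (\<forall>c x y. s c (x * y) = s c x * y \<and> s c (x * y) = x * s c y)
     \<and> (\<exists>B. finite B \<and> module.span s B = UNIV)"

definition alg_hom :: "('k::field \<Rightarrow> 'a::ring_1 \<Rightarrow> 'a) \<Rightarrow> ('k \<Rightarrow> 'b::ring_1 \<Rightarrow> 'b)
    \<Rightarrow> ('a \<Rightarrow> 'b) \<Rightarrow> bool" where
  "alg_hom sa sb f \<longleftrightarrow> f 1 = 1 \<and> (\<forall>x y. f (x + y) = f x + f y) \<and>
     (\<forall>x y. f (x * y) = f x * f y) \<and> (\<forall>c x. f (sa c x) = sb c (f x))"

definition nilpotent_ideal :: "'b::ring_1 set \<Rightarrow> bool" where
  "nilpotent_ideal I \<longleftrightarrow> (\<exists>n>0. \<forall>xs. length xs = n \<longrightarrow> set xs \<subseteq> I \<longrightarrow> prod_list xs = 0)"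

definition split_by_nilpotent ::
  "('k::field \<Rightarrow> 'a::ring_1 \<Rightarrow> 'a) \<Rightarrow> ('k \<Rightarrow> 'b::ring_1 \<Rightarrow> 'b)
    \<Rightarrow> ('b \<Rightarrow> 'a) \<Rightarrow> ('a \<Rightarrow> 'b) \<Rightarrow> bool" where
  "split_by_nilpotent sA sL \<pi> \<iota> \<longleftrightarrow>
     alg_hom sL sA \<pi> \<and> surj \<pi> \<and> alg_hom sA sL \<iota> \<and> (\<forall>a. \<pi> (\<iota> a) = a)
     \<and> nilpotent_ideal {x. \<pi> x = 0}"

text \<open>Model: a f.g. projective right R-module is (up to isomorphism) e R^n (column vectors,
  R acting on the right), e an idempotent n x n matrix. Homomorphisms e R^n \<rightarrow> f R^m are the
  m x n matrices g with g = f g e, acting by left multiplication.\<close>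

record 'a cpx =
  rk :: "int \<Rightarrow> nat"
  idm :: "int \<Rightarrow> 'a mat"
  dif :: "int \<Rightarrow> 'a mat"

definition is_hom :: "'a::ring_1 mat \<Rightarrow> 'a mat \<Rightarrow> 'a mat \<Rightarrow> bool" where
  "is_hom e f g \<longleftrightarrow> g \<in> carrier_mat (dim_row f) (dim_col e) \<and> f * g * e = g"

definition is_cpx :: "'a::ring_1 cpx \<Rightarrow> bool" where
  "is_cpx X \<longleftrightarrow>
     (\<forall>i. idm X i \<in> carrier_mat (rk X i) (rk X i) \<and> idm X i * idm X i = idm X i)
   \<and> (\<forall>i. is_hom (idm X i) (idm X (i+1)) (dif X i))
   \<and> (\<forall>i. dif X (i+1) * dif X i = 0\<^sub>m (rk X (i+2)) (rk X i))
   \<and> (\<exists>N. \<forall>i. \<bar>i\<bar> > N \<longrightarrow> rk X i = 0)"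

definition chain_map :: "'a::ring_1 cpx \<Rightarrow> 'a cpx \<Rightarrow> (int \<Rightarrow> 'a mat) \<Rightarrow> bool" where
  "chain_map X Y f \<longleftrightarrow>
     (\<forall>i. is_hom (idm X i) (idm Y i) (f i))
   \<and> (\<forall>i. f (i+1) * dif X i = dif Y i * f i)"

definition null_homotopic :: "'a::ring_1 cpx \<Rightarrow> 'a cpx \<Rightarrow> (int \<Rightarrow> 'a mat) \<Rightarrow> bool" where
  "null_homotopic X Y f \<longleftrightarrow> (\<exists>h.
     (\<forall>i. is_hom (idm X i) (idm Y (i-1)) (h i))
   \<and> (\<forall>i. f i = dif Y (i-1) * h i + h (i+1) * dif X i))"

definition cpx_id :: "'a::ring_1 cpx \<Rightarrow> int \<Rightarrow> 'a mat" where
  "cpx_id X i = idm X i"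

definition comp_map :: "(int \<Rightarrow> 'a::ring_1 mat) \<Rightarrow> (int \<Rightarrow> 'a mat) \<Rightarrow> int \<Rightarrow> 'a mat" where
  "comp_map g f i = g i * f i"

definition diff_map :: "(int \<Rightarrow> 'a::ring_1 mat) \<Rightarrow> (int \<Rightarrow> 'a mat) \<Rightarrow> int \<Rightarrow> 'a mat" where
  "diff_map f g i = f i - g i"

text \<open>Isomorphism in K^b: homotopy equivalence.\<close>
definition htpy_equiv :: "'a::ring_1 cpx \<Rightarrow> 'a cpx \<Rightarrow> bool" where
  "htpy_equiv X Y \<longleftrightarrow> (\<exists>f g. chain_map X Y f \<and> chain_map Y X g
     \<and> null_homotopic X X (diff_map (comp_map g f) (cpx_id X))
     \<and> null_homotopic Y Y (diff_map (comp_map f g) (cpx_id Y)))"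

text \<open>Zero object of K^b: contractible complex (identity null-homotopic).\<close>
definition contractible :: "'a::ring_1 cpx \<Rightarrow> bool" where
  "contractible X \<longleftrightarrow> null_homotopic X X (cpx_id X)"

definition dsum :: "'a::ring_1 cpx \<Rightarrow> 'a cpx \<Rightarrow> 'a cpx" where
  "dsum X Y = \<lparr> rk = (\<lambda>i. rk X i + rk Y i),
     idm = (\<lambda>i. four_block_mat (idm X i) (0\<^sub>m (rk X i) (rk Y i)) (0\<^sub>m (rk Y i) (rk X i)) (idm Y i)),
     dif = (\<lambda>i. four_block_mat (dif X i) (0\<^sub>m (rk X (i+1)) (rk Y i))
                               (0\<^sub>m (rk Y (i+1)) (rk X i)) (dif Y i)) \<rparr>"

definition indecomposable :: "'a::ring_1 cpx \<Rightarrow> bool" where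
  "indecomposable X \<longleftrightarrow> \<not> contractible X \<and>
     (\<forall>Y Z. is_cpx Y \<longrightarrow> is_cpx Z \<longrightarrow> htpy_equiv X (dsum Y Z) \<longrightarrow> contractible Y \<or> contractible Z)"

text \<open>The functor - \<otimes>_A \<Lambda> (\<Lambda> a left A-module via \<iota>): e A^n \<otimes>_A \<Lambda> = \<iota>(e) \<Lambda>^n, and a
  matrix g of a homomorphism is sent to \<iota>(g), entrywise.\<close>
definition tensor_cpx :: "('a \<Rightarrow> 'b) \<Rightarrow> 'a cpx \<Rightarrow> 'b cpx" where
  "tensor_cpx \<iota> X = \<lparr> rk = rk X, idm = (\<lambda>i. map_mat \<iota> (idm X i)), dif = (\<lambda>i. map_mat \<iota> (dif X i)) \<rparr>"

end

theory Submission
  imports Defs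
begin

definition rh :: "('a::ring_1 \<Rightarrow> 'b::ring_1) \<Rightarrow> bool" where
  "rh \<phi> \<longleftrightarrow> \<phi> 1 = 1 \<and> (\<forall>x y. \<phi> (x+y) = \<phi> x + \<phi> y) \<and> (\<forall>x y. \<phi> (x*y) = \<phi> x * \<phi> y)"

lemma rh_add: "rh \<phi> \<Longrightarrow> \<phi> (x+y) = \<phi> x + \<phi> y" unfolding rh_def by blast
lemma rh_mult: "rh \<phi> \<Longrightarrow> \<phi> (x*y) = \<phi> x * \<phi> y" unfolding rh_def by blast
lemma rh_0: "rh \<phi> \<Longrightarrow> \<phi> 0 = 0"
  using rh_add[of \<phi> 0 0] by simp
lemma rh_uminus: "rh \<phi> \<Longrightarrow> \<phi> (-x) = - \<phi> x"
  using rh_add[of \<phi> "-x" x] rh_0[of \<phi>] by (simp add: eq_neg_iff_add_eq_0)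
lemma rh_minus: "rh \<phi> \<Longrightarrow> \<phi> (x-y) = \<phi> x - \<phi> y"
  using rh_add[of \<phi> x "-y"] rh_uminus[of \<phi> y] by simp
lemma rh_sum: "rh \<phi> \<Longrightarrow> \<phi> (sum f S) = sum (\<lambda>x. \<phi> (f x)) S"
  by (induction S rule: infinite_finite_induct) (auto simp: rh_0 rh_add)

lemma map_mat_mult: assumes "rh \<phi>" "dim_col A = dim_row B"
  shows "map_mat \<phi> (A*B) = map_mat \<phi> A * map_mat \<phi> B"
  using assms by (intro eq_matI) (auto simp: scalar_prod_def rh_sum rh_mult)

lemma map_mat_add: assumes "rh \<phi>" "dim_row A = dim_row B" "dim_col A = dim_col B"
  shows "map_mat \<phi> (A+B) = map_mat \<phi> A + map_mat \<phi> B"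
  using assms by (intro eq_matI) (auto simp: rh_add)

lemma map_mat_minus: assumes "rh \<phi>" "dim_row A = dim_row B" "dim_col A = dim_col B"
  shows "map_mat \<phi> (A-B) = map_mat \<phi> A - map_mat \<phi> B"
  using assms by (intro eq_matI) (auto simp: rh_minus)

lemma map_mat_zero: "rh \<phi> \<Longrightarrow> map_mat \<phi> (0\<^sub>m n m) = 0\<^sub>m n m"
  by (intro eq_matI) (auto simp: rh_0)

lemma map_mat_four: assumes "rh \<phi>" "dim_row B = dim_row A" "dim_col B = dim_col D"
   "dim_row C = dim_row D" "dim_col C = dim_col A"
  shows "map_mat \<phi> (four_block_mat A B C D) = four_block_mat (map_mat \<phi> A) (map_mat \<phi> B) (map_mat \<phi> C) (map_mat \<phi> D)"
  using assms by (intro eq_matI) auto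

definition dims_ok :: "'a::ring_1 cpx \<Rightarrow> bool" where
  "dims_ok X \<longleftrightarrow> (\<forall>i. idm X i \<in> carrier_mat (rk X i) (rk X i) \<and> dif X i \<in> carrier_mat (rk X (i+1)) (rk X i))"

lemma cpx_dims: assumes "is_cpx X" shows "dims_ok X"
  unfolding dims_ok_def
proof
  fix i
  have a: "idm X j \<in> carrier_mat (rk X j) (rk X j)" for j using assms unfolding is_cpx_def by blast
  have "dif X i \<in> carrier_mat (dim_row (idm X (i+1))) (dim_col (idm X i))"
    using assms unfolding is_cpx_def is_hom_def by blast
  then show "idm X i \<in> carrier_mat (rk X i) (rk X i) \<and> dif X i \<in> carrier_mat (rk X (i + 1)) (rk X i)"
    using a[of i] carrier_matD(1)[OF a[of "i+1"]] carrier_matD(2)[OF a[of i]] by simp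
qed

lemma dims_okD: "dims_ok X \<Longrightarrow> idm X i \<in> carrier_mat (rk X i) (rk X i)"
   "dims_ok X \<Longrightarrow> dif X i \<in> carrier_mat (rk X (i+1)) (rk X i)"
  unfolding dims_ok_def by auto

lemma tensor_simps[simp]: "rk (tensor_cpx \<phi> X) = rk X"
  "idm (tensor_cpx \<phi> X) i = map_mat \<phi> (idm X i)"
  "dif (tensor_cpx \<phi> X) i = map_mat \<phi> (dif X i)"
  unfolding tensor_cpx_def by auto

lemma dims_ok_tensor: "dims_ok X \<Longrightarrow> dims_ok (tensor_cpx \<phi> X)"
  unfolding dims_ok_def by auto

lemma dims_ok_dsum: "dims_ok Y \<Longrightarrow> dims_ok Z \<Longrightarrow> dims_ok (dsum Y Z)"
  unfolding dims_ok_def dsum_def by auto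

lemma map_hom: assumes "rh \<phi>" "e \<in> carrier_mat n n" "f \<in> carrier_mat m m" "is_hom e f g"
  shows "is_hom (map_mat \<phi> e) (map_mat \<phi> f) (map_mat \<phi> g)"
proof -
  have g: "g \<in> carrier_mat m n" using assms unfolding is_hom_def by auto
  have "map_mat \<phi> f * map_mat \<phi> g * map_mat \<phi> e = map_mat \<phi> (f * g * e)"
    using g assms by (simp add: map_mat_mult)
  then show ?thesis using assms g unfolding is_hom_def by auto
qed

lemma hom_car: "is_hom e f g \<Longrightarrow> e \<in> carrier_mat n n \<Longrightarrow> f \<in> carrier_mat m m \<Longrightarrow> g \<in> carrier_mat m n"
  unfolding is_hom_def by auto

lemma map_chain: assumes "rh \<phi>" "dims_ok X" "dims_ok Y" "chain_map X Y f"
  shows "chain_map (tensor_cpx \<phi> X) (tensor_cpx \<phi> Y) (\<lambda>i. map_mat \<phi> (f i))"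
  unfolding chain_map_def
proof (intro conjI allI)
  fix i
  note car = dims_okD[OF assms(2)] dims_okD[OF assms(3)]
  have fc: "f j \<in> carrier_mat (rk Y j) (rk X j)" for j
    using hom_car assms(4) car unfolding chain_map_def by blast
  show "is_hom (idm (tensor_cpx \<phi> X) i) (idm (tensor_cpx \<phi> Y) i) (map_mat \<phi> (f i))"
    using map_hom[OF assms(1) car(1) car(3)] assms(4) unfolding chain_map_def by auto
  have "map_mat \<phi> (f (i + 1)) * map_mat \<phi> (dif X i) = map_mat \<phi> (f (i + 1) * dif X i)"
    using fc[of "i+1"] car(2)[of i] assms(1) by (simp add: map_mat_mult)
  also have "\<dots> = map_mat \<phi> (dif Y i * f i)" using assms(4) unfolding chain_map_def by auto
  also have "\<dots> = map_mat \<phi> (dif Y i) * map_mat \<phi> (f i)"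
    using fc[of "i"] car(4)[of i] assms(1) by (simp add: map_mat_mult)
  finally show "map_mat \<phi> (f (i + 1)) * dif (tensor_cpx \<phi> X) i = dif (tensor_cpx \<phi> Y) i * map_mat \<phi> (f i)"
    by simp
qed

lemma map_null: assumes "rh \<phi>" "dims_ok X" "dims_ok Y" "null_homotopic X Y f"
  shows "null_homotopic (tensor_cpx \<phi> X) (tensor_cpx \<phi> Y) (\<lambda>i. map_mat \<phi> (f i))"
proof -
  note car = dims_okD[OF assms(2)] dims_okD[OF assms(3)]
  obtain h where h1: "\<And>i. is_hom (idm X i) (idm Y (i-1)) (h i)"
    and h2: "\<And>i. f i = dif Y (i-1) * h i + h (i+1) * dif X i"
    using assms(4) unfolding null_homotopic_def by blast
  have hc: "h j \<in> carrier_mat (rk Y (j-1)) (rk X j)" for j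
    using hom_car h1 car by blast
  show ?thesis unfolding null_homotopic_def
  proof (intro exI[of _ "\<lambda>i. map_mat \<phi> (h i)"] conjI allI)
    fix i
    show "is_hom (idm (tensor_cpx \<phi> X) i) (idm (tensor_cpx \<phi> Y) (i - 1)) (map_mat \<phi> (h i))"
      using map_hom[OF assms(1) car(1) car(3) h1] by simp
    have d1: "dif Y (i-1) \<in> carrier_mat (rk Y i) (rk Y (i-1))" using car(4)[of "i-1"] by simp
    have h3: "h (i+1) \<in> carrier_mat (rk Y i) (rk X (i+1))" using hc[of "i+1"] by simp
    show "map_mat \<phi> (f i) = dif (tensor_cpx \<phi> Y) (i - 1) * map_mat \<phi> (h i) + map_mat \<phi> (h (i + 1)) * dif (tensor_cpx \<phi> X) i"
      unfolding h2 using d1 h3 hc[of i] car(2)[of i] assms(1)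
      by (simp add: map_mat_mult map_mat_add)
  qed
qed

lemma map_htpy: assumes "rh \<phi>" "dims_ok X" "dims_ok Y" "htpy_equiv X Y"
  shows "htpy_equiv (tensor_cpx \<phi> X) (tensor_cpx \<phi> Y)"
proof -
  note car = dims_okD[OF assms(2)] dims_okD[OF assms(3)]
  obtain f g where f: "chain_map X Y f" and g: "chain_map Y X g"
    and n1: "null_homotopic X X (diff_map (comp_map g f) (cpx_id X))"
    and n2: "null_homotopic Y Y (diff_map (comp_map f g) (cpx_id Y))"
    using assms(4) unfolding htpy_equiv_def by blast
  have fc: "f j \<in> carrier_mat (rk Y j) (rk X j)" for j
    using hom_car f car unfolding chain_map_def by blast
  have gc: "g j \<in> carrier_mat (rk X j) (rk Y j)" for j
    using hom_car g car unfolding chain_map_def by blast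
  have m: "map_mat \<phi> (b i * a i - idm W i) = map_mat \<phi> (b i) * map_mat \<phi> (a i) - map_mat \<phi> (idm W i)"
    if "a i \<in> carrier_mat p q" "b i \<in> carrier_mat q p" "idm W i \<in> carrier_mat q q"
    for a b :: "int \<Rightarrow> 'a mat" and W i p q
    using map_mat_minus[OF assms(1), of "b i * a i" "idm W i"] map_mat_mult[OF assms(1), of "b i" "a i"] that
    by (simp add: carrier_matD)
  have e1: "(\<lambda>i. map_mat \<phi> (diff_map (comp_map g f) (cpx_id X) i)) =
     diff_map (comp_map (\<lambda>i. map_mat \<phi> (g i)) (\<lambda>i. map_mat \<phi> (f i))) (cpx_id (tensor_cpx \<phi> X))"
    unfolding diff_map_def comp_map_def cpx_id_def tensor_simps
    by (rule ext, rule m[OF fc gc car(1)])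
  have e2: "(\<lambda>i. map_mat \<phi> (diff_map (comp_map f g) (cpx_id Y) i)) =
     diff_map (comp_map (\<lambda>i. map_mat \<phi> (f i)) (\<lambda>i. map_mat \<phi> (g i))) (cpx_id (tensor_cpx \<phi> Y))"
    unfolding diff_map_def comp_map_def cpx_id_def tensor_simps
    by (rule ext, rule m[OF gc fc car(3)])
  show ?thesis unfolding htpy_equiv_def
    using map_chain[OF assms(1-3) f] map_chain[OF assms(1) assms(3) assms(2) g]
      map_null[OF assms(1) assms(2) assms(2) n1] map_null[OF assms(1) assms(3) assms(3) n2]
    unfolding e1 e2 by blast
qed

lemma map_contr: assumes "rh \<phi>" "dims_ok X" "contractible X"
  shows "contractible (tensor_cpx \<phi> X)"
  using map_null[OF assms(1,2,2)] assms(3) unfolding contractible_def cpx_id_def by simp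

lemma map_is_cpx: assumes "rh \<phi>" "is_cpx X" shows "is_cpx (tensor_cpx \<phi> X)"
proof -
  note car = dims_okD[OF cpx_dims[OF assms(2)]]
  have "idm X i * idm X i = idm X i" for i using assms(2) unfolding is_cpx_def by auto
  moreover have "is_hom (idm X i) (idm X (i+1)) (dif X i)" for i using assms(2) unfolding is_cpx_def by auto
  moreover have "dif X (i+1) * dif X i = 0\<^sub>m (rk X (i+2)) (rk X i)" for i using assms(2) unfolding is_cpx_def by auto
  moreover have "\<exists>N. \<forall>i. \<bar>i\<bar> > N \<longrightarrow> rk X i = 0" using assms(2) unfolding is_cpx_def by auto
  ultimately show ?thesis unfolding is_cpx_def tensor_simps
  proof (intro conjI allI)
    fix i
    assume i1: "\<And>i. idm X i * idm X i = idm X i"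
      and i2: "\<And>i. is_hom (idm X i) (idm X (i+1)) (dif X i)"
      and i3: "\<And>i. dif X (i+1) * dif X i = 0\<^sub>m (rk X (i+2)) (rk X i)"
      and i4: "\<exists>N. \<forall>i. \<bar>i\<bar> > N \<longrightarrow> rk X i = 0"
    show "map_mat \<phi> (idm X i) \<in> carrier_mat (rk X i) (rk X i)" using car(1)[of i] by simp
    show "map_mat \<phi> (idm X i) * map_mat \<phi> (idm X i) = map_mat \<phi> (idm X i)"
      using map_mat_mult[OF assms(1), of "idm X i" "idm X i"] car(1)[of i] i1[of i] by (simp add: carrier_matD)
    show "is_hom (map_mat \<phi> (idm X i)) (map_mat \<phi> (idm X (i + 1))) (map_mat \<phi> (dif X i))"
      by (rule map_hom[OF assms(1) car(1) car(1) i2])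
    show "map_mat \<phi> (dif X (i + 1)) * map_mat \<phi> (dif X i) = 0\<^sub>m (rk X (i + 2)) (rk X i)"
      using map_mat_mult[OF assms(1), of "dif X (i+1)" "dif X i"] car(2)[of i] car(2)[of "i+1"] i3[of i]
        map_mat_zero[OF assms(1)] by (simp add: carrier_matD)
    show "\<exists>N. \<forall>i. \<bar>i\<bar> > N \<longrightarrow> rk X i = 0" by (rule i4)
  qed
qed

lemma map_dsum: assumes "rh \<phi>" "dims_ok Y" "dims_ok Z"
  shows "tensor_cpx \<phi> (dsum Y Z) = dsum (tensor_cpx \<phi> Y) (tensor_cpx \<phi> Z)"
proof -
  note car = dims_okD[OF assms(2)] dims_okD[OF assms(3)]
  have a: "map_mat \<phi> (four_block_mat (idm Y i) (0\<^sub>m (rk Y i) (rk Z i)) (0\<^sub>m (rk Z i) (rk Y i)) (idm Z i))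
    = four_block_mat (map_mat \<phi> (idm Y i)) (0\<^sub>m (rk Y i) (rk Z i)) (0\<^sub>m (rk Z i) (rk Y i)) (map_mat \<phi> (idm Z i))" for i
    using map_mat_four[OF assms(1), of "0\<^sub>m (rk Y i) (rk Z i)" "idm Y i" "idm Z i" "0\<^sub>m (rk Z i) (rk Y i)"]
      car(1)[of i] car(3)[of i] map_mat_zero[OF assms(1)] by (simp add: carrier_matD)
  have b: "map_mat \<phi> (four_block_mat (dif Y i) (0\<^sub>m (rk Y (i+1)) (rk Z i)) (0\<^sub>m (rk Z (i+1)) (rk Y i)) (dif Z i))
    = four_block_mat (map_mat \<phi> (dif Y i)) (0\<^sub>m (rk Y (i+1)) (rk Z i)) (0\<^sub>m (rk Z (i+1)) (rk Y i)) (map_mat \<phi> (dif Z i))" for i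
    using map_mat_four[OF assms(1), of "0\<^sub>m (rk Y (i+1)) (rk Z i)" "dif Y i" "dif Z i" "0\<^sub>m (rk Z (i+1)) (rk Y i)"]
      car(2)[of i] car(4)[of i] map_mat_zero[OF assms(1)] by (simp add: carrier_matD)
  show ?thesis unfolding tensor_cpx_def dsum_def using a b by simp
qed

lemma map_map_id: assumes "\<And>a. \<pi> (\<iota> a) = a" shows "tensor_cpx \<pi> (tensor_cpx \<iota> X) = X"
proof -
  have m: "map_mat \<pi> (map_mat \<iota> M) = M" for M by (intro eq_matI) (auto simp: assms)
  show ?thesis by (simp add: tensor_cpx_def m)
qed


lemma hom_absorb: assumes "is_hom e f g" "e \<in> carrier_mat n n" "e*e=e" "f \<in> carrier_mat m m" "f*f = f"
  shows "f*g = g" "g*e = g"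
proof -
  have g: "g \<in> carrier_mat m n" using hom_car assms by blast
  have gg: "f*g*e = g" using assms unfolding is_hom_def by blast
  have ge: "f*g*e = f*(g*e)" by (rule assoc_mult_mat[OF assms(4) g assms(2)])
  have "f*g = f*(f*(g*e))" using gg ge by simp
  also have "\<dots> = (f*f)*(g*e)" using assoc_mult_mat[OF assms(4) assms(4) mult_carrier_mat[OF g assms(2)]] by simp
  also have "\<dots> = g" using assms(5) gg ge by simp
  finally show "f*g = g" .
  have "g*e = (f*g)*e*e" using gg by simp
  also have "\<dots> = (f*g)*(e*e)" using assoc_mult_mat[OF mult_carrier_mat[OF assms(4) g] assms(2) assms(2)] by simp
  also have "\<dots> = g" using assms(3) gg by simp
  finally show "g*e = g" .
qed

lemma hom_intro: assumes "g \<in> carrier_mat m n" "f*g = g" "g*e = g" "e \<in> carrier_mat n n" "f \<in> carrier_mat m m"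
  shows "is_hom e f g"
  using assms unfolding is_hom_def by (simp add: carrier_matD)

lemma cpx_e: "is_cpx Y \<Longrightarrow> idm Y i \<in> carrier_mat (rk Y i) (rk Y i)"
  using cpx_dims dims_okD by blast
lemma cpx_d: "is_cpx Y \<Longrightarrow> dif Y i \<in> carrier_mat (rk Y (i+1)) (rk Y i)"
  using cpx_dims dims_okD by blast
lemma cpx_d': "is_cpx Y \<Longrightarrow> dif Y (i-1) \<in> carrier_mat (rk Y i) (rk Y (i-1))"
  using cpx_d[of Y "i-1"] by simp
lemma cpx_ee: "is_cpx Y \<Longrightarrow> idm Y i * idm Y i = idm Y i"
  unfolding is_cpx_def by blast
lemma cpx_dd: "is_cpx Y \<Longrightarrow> dif Y (i+1) * dif Y i = 0\<^sub>m (rk Y (i+2)) (rk Y i)"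
  unfolding is_cpx_def by blast
lemma cpx_dd': "is_cpx Y \<Longrightarrow> dif Y i * dif Y (i-1) = 0\<^sub>m (rk Y (i+1)) (rk Y (i-1))"
  using cpx_dd[of Y "i-1"] by (simp add: algebra_simps)
lemma cpx_ed: "is_cpx Y \<Longrightarrow> idm Y (i+1) * dif Y i = dif Y i"
proof -
  assume c: "is_cpx Y"
  have "is_hom (idm Y i) (idm Y (i+1)) (dif Y i)" using c unfolding is_cpx_def by blast
  from hom_absorb(1)[OF this cpx_e[OF c] cpx_ee[OF c] cpx_e[OF c] cpx_ee[OF c]] show ?thesis .
qed
lemma cpx_ed': "is_cpx Y \<Longrightarrow> idm Y i * dif Y (i-1) = dif Y (i-1)"
  using cpx_ed[of Y "i-1"] by simp
lemma cpx_de: "is_cpx Y \<Longrightarrow> dif Y i * idm Y i = dif Y i"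
proof -
  assume c: "is_cpx Y"
  have "is_hom (idm Y i) (idm Y (i+1)) (dif Y i)" using c unfolding is_cpx_def by blast
  from hom_absorb(2)[OF this cpx_e[OF c] cpx_ee[OF c] cpx_e[OF c] cpx_ee[OF c]] show ?thesis .
qed

lemma endo_hom: assumes "is_cpx Y" "is_hom (idm Y i) (idm Y j) g"
  shows "g \<in> carrier_mat (rk Y j) (rk Y i)" "idm Y j * g = g" "g * idm Y i = g"
  using hom_car[OF assms(2) cpx_e[OF assms(1)] cpx_e[OF assms(1)]]
    hom_absorb[OF assms(2) cpx_e[OF assms(1)] cpx_ee[OF assms(1)] cpx_e[OF assms(1)] cpx_ee[OF assms(1)]]
  by auto

lemma hom_add: assumes "is_cpx Y" "is_hom (idm Y i) (idm Y j) a" "is_hom (idm Y i) (idm Y j) b"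
  shows "is_hom (idm Y i) (idm Y j) (a+b)"
proof -
  note A = endo_hom[OF assms(1,2)] and B = endo_hom[OF assms(1,3)]
  show ?thesis
  proof (rule hom_intro[OF _ _ _ cpx_e[OF assms(1)] cpx_e[OF assms(1)]])
    show "a + b \<in> carrier_mat (rk Y j) (rk Y i)" using A B by simp
    show "idm Y j * (a + b) = a + b" using A B mult_add_distrib_mat[OF cpx_e[OF assms(1)] A(1) B(1)] by simp
    show "(a + b) * idm Y i = a + b" using A B add_mult_distrib_mat[OF A(1) B(1) cpx_e[OF assms(1)]] by simp
  qed
qed

lemma hom_diff: assumes "is_cpx Y" "is_hom (idm Y i) (idm Y j) a" "is_hom (idm Y i) (idm Y j) b"
  shows "is_hom (idm Y i) (idm Y j) (a-b)"
proof -
  note A = endo_hom[OF assms(1,2)] and B = endo_hom[OF assms(1,3)]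
  show ?thesis
  proof (rule hom_intro[OF _ _ _ cpx_e[OF assms(1)] cpx_e[OF assms(1)]])
    show "a - b \<in> carrier_mat (rk Y j) (rk Y i)" using A B by (simp add: minus_carrier_mat)
    show "idm Y j * (a - b) = a - b" using A B mult_minus_distrib_mat[OF cpx_e[OF assms(1)] A(1) B(1)] by simp
    show "(a - b) * idm Y i = a - b" using A B minus_mult_distrib_mat[OF A(1) B(1) cpx_e[OF assms(1)]] by simp
  qed
qed

lemma hom_mult: assumes "is_cpx Y" "is_hom (idm Y j) (idm Y k) a" "is_hom (idm Y i) (idm Y j) b"
  shows "is_hom (idm Y i) (idm Y k) (a*b)"
proof -
  note A = endo_hom[OF assms(1,2)] and B = endo_hom[OF assms(1,3)]
  show ?thesis
  proof (rule hom_intro[OF _ _ _ cpx_e[OF assms(1)] cpx_e[OF assms(1)]])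
    show "a * b \<in> carrier_mat (rk Y k) (rk Y i)" using A B by simp
    show "idm Y k * (a * b) = a * b" using A B assoc_mult_mat[OF cpx_e[OF assms(1)] A(1) B(1)] by simp
    show "(a * b) * idm Y i = a * b" using A B assoc_mult_mat[OF A(1) B(1) cpx_e[OF assms(1)]] by simp
  qed
qed

lemma hom_d: "is_cpx Y \<Longrightarrow> is_hom (idm Y i) (idm Y (i+1)) (dif Y i)"
  unfolding is_cpx_def by blast
lemma hom_d': "is_cpx Y \<Longrightarrow> is_hom (idm Y (i-1)) (idm Y i) (dif Y (i-1))"
  using hom_d[of Y "i-1"] by simp
lemma hom_e: "is_cpx Y \<Longrightarrow> is_hom (idm Y i) (idm Y i) (idm Y i)"
  using cpx_e[of Y i] cpx_ee[of Y i] unfolding is_hom_def by (simp add: carrier_matD)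

lemma chain_id: "is_cpx Y \<Longrightarrow> chain_map Y Y (cpx_id Y)"
  unfolding chain_map_def cpx_id_def using hom_e cpx_ed cpx_de by metis

lemma chain_diff: assumes "is_cpx Y" "chain_map Y Y a" "chain_map Y Y b"
  shows "chain_map Y Y (\<lambda>i. a i - b i)"
  unfolding chain_map_def
proof (intro allI conjI)
  fix i
  have ha: "is_hom (idm Y j) (idm Y j) (a j)" and hb: "is_hom (idm Y j) (idm Y j) (b j)" for j
    using assms unfolding chain_map_def by auto
  show "is_hom (idm Y i) (idm Y i) (a i - b i)" using hom_diff[OF assms(1) ha hb] .
  have ca: "a (i+1) * dif Y i = dif Y i * a i" and cb: "b (i+1) * dif Y i = dif Y i * b i"
    using assms unfolding chain_map_def by auto
  show "(a (i + 1) - b (i + 1)) * dif Y i = dif Y i * (a i - b i)"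
    using minus_mult_distrib_mat[OF endo_hom(1)[OF assms(1) ha] endo_hom(1)[OF assms(1) hb] cpx_d[OF assms(1)]]
      mult_minus_distrib_mat[OF cpx_d[OF assms(1)] endo_hom(1)[OF assms(1) ha] endo_hom(1)[OF assms(1) hb]]
      ca cb by simp
qed

lemma chain_comp: assumes "is_cpx Y" "chain_map Y Y a" "chain_map Y Y b"
  shows "chain_map Y Y (\<lambda>i. a i * b i)"
  unfolding chain_map_def
proof (intro allI conjI)
  fix i
  have ha: "is_hom (idm Y j) (idm Y j) (a j)" and hb: "is_hom (idm Y j) (idm Y j) (b j)" for j
    using assms unfolding chain_map_def by auto
  note A = endo_hom(1)[OF assms(1) ha] and B = endo_hom(1)[OF assms(1) hb] and D = cpx_d[OF assms(1)]
  show "is_hom (idm Y i) (idm Y i) (a i * b i)" using hom_mult[OF assms(1) ha hb] .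
  have ca: "a (i+1) * dif Y i = dif Y i * a i" and cb: "b (i+1) * dif Y i = dif Y i * b i"
    using assms unfolding chain_map_def by auto
  have "(a (i + 1) * b (i + 1)) * dif Y i = a (i+1) * (b (i+1) * dif Y i)"
    using assoc_mult_mat[OF A B D] .
  also have "\<dots> = a (i+1) * (dif Y i * b i)" using cb by simp
  also have "\<dots> = (a (i+1) * dif Y i) * b i" using assoc_mult_mat[OF A D B] by simp
  also have "\<dots> = (dif Y i * a i) * b i" using ca by simp
  also have "\<dots> = dif Y i * (a i * b i)" using assoc_mult_mat[OF D A B] .
  finally show "(a (i + 1) * b (i + 1)) * dif Y i = dif Y i * (a i * b i)" .
qed

lemma null_chain: assumes Y: "is_cpx Y" and n: "null_homotopic Y Y f"
  shows "chain_map Y Y f"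
proof -
  obtain h where hh: "\<And>i. is_hom (idm Y i) (idm Y (i-1)) (h i)"
    and fe: "\<And>i. f i = dif Y (i-1) * h i + h (i+1) * dif Y i"
    using n unfolding null_homotopic_def by blast
  have hh1: "is_hom (idm Y (i+1)) (idm Y i) (h (i+1))" for i using hh[of "i+1"] by simp
  have hc: "h i \<in> carrier_mat (rk Y (i-1)) (rk Y i)" for i using endo_hom(1)[OF Y hh] .
  have hc1: "h (i+1) \<in> carrier_mat (rk Y i) (rk Y (i+1))" for i using endo_hom(1)[OF Y hh1] .
  note D = cpx_d[OF Y] and D' = cpx_d'[OF Y]
  show ?thesis unfolding chain_map_def
  proof (intro allI conjI)
    fix i
    show "is_hom (idm Y i) (idm Y i) (f i)" unfolding fe[of i]
      by (rule hom_add[OF Y hom_mult[OF Y hom_d'[OF Y] hh] hom_mult[OF Y hh1 hom_d[OF Y]]])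
    have f1: "f (i+1) = dif Y i * h (i+1) + h (i+2) * dif Y (i+1)" using fe[of "i+1"]
      by (simp add: add.assoc)
    have hc2: "h (i+2) \<in> carrier_mat (rk Y (i+1)) (rk Y (i+2))" using hc[of "i+2"] by (simp add: add.commute)
    have D2: "dif Y (i+1) \<in> carrier_mat (rk Y (i+2)) (rk Y (i+1))" using D[of "i+1"] by (simp add: add.assoc)
    have "f (i+1) * dif Y i = dif Y i * h (i+1) * dif Y i + h (i+2) * dif Y (i+1) * dif Y i"
      unfolding f1 by (rule add_mult_distrib_mat[OF mult_carrier_mat[OF D hc1] mult_carrier_mat[OF hc2 D2] D])
    also have "h (i+2) * dif Y (i+1) * dif Y i = 0\<^sub>m (rk Y (i+1)) (rk Y i)"
      using assoc_mult_mat[OF hc2 D2 D] cpx_dd[OF Y, of i] hc2 by simp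
    also have "dif Y i * h (i+1) * dif Y i + 0\<^sub>m (rk Y (i+1)) (rk Y i) = dif Y i * h (i+1) * dif Y i"
      using mult_carrier_mat[OF mult_carrier_mat[OF D hc1] D] by simp
    also have "dif Y i * h (i+1) * dif Y i = 0\<^sub>m (rk Y (i+1)) (rk Y i) + dif Y i * (h (i+1) * dif Y i)"
      using mult_carrier_mat[OF mult_carrier_mat[OF D hc1] D] assoc_mult_mat[OF D hc1 D] by simp
    also have "0\<^sub>m (rk Y (i+1)) (rk Y i) = dif Y i * (dif Y (i-1) * h i)"
      using assoc_mult_mat[OF D D' hc, of i, symmetric] cpx_dd'[OF Y, of i] hc[of i] by simp
    also have "dif Y i * (dif Y (i-1) * h i) + dif Y i * (h (i+1) * dif Y i) = dif Y i * f i"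
      unfolding fe[of i]
      by (rule mult_add_distrib_mat[symmetric, OF D mult_carrier_mat[OF D' hc] mult_carrier_mat[OF hc1 D]])
    finally show "f (i+1) * dif Y i = dif Y i * f i" .
  qed
qed

lemma add4: fixes A :: "'a::ring_1 mat"
  assumes "A \<in> carrier_mat n m" "B \<in> carrier_mat n m" "C \<in> carrier_mat n m" "D \<in> carrier_mat n m"
  shows "(A + B) + (C + D) = (A + C) + (B + D)"
  using assms by (intro eq_matI) (auto simp: algebra_simps)

lemma null_add: assumes Y: "is_cpx Y" and n1: "null_homotopic Y Y f" and n2: "null_homotopic Y Y g"
  shows "null_homotopic Y Y (\<lambda>i. f i + g i)"
proof -
  obtain h where hh: "\<And>i. is_hom (idm Y i) (idm Y (i-1)) (h i)"
    and fe: "\<And>i. f i = dif Y (i-1) * h i + h (i+1) * dif Y i"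
    using n1 unfolding null_homotopic_def by blast
  obtain k where kk: "\<And>i. is_hom (idm Y i) (idm Y (i-1)) (k i)"
    and ge: "\<And>i. g i = dif Y (i-1) * k i + k (i+1) * dif Y i"
    using n2 unfolding null_homotopic_def by blast
  have hc: "h i \<in> carrier_mat (rk Y (i-1)) (rk Y i)" for i using endo_hom(1)[OF Y hh] .
  have kc: "k i \<in> carrier_mat (rk Y (i-1)) (rk Y i)" for i using endo_hom(1)[OF Y kk] .
  have hc1: "h (i+1) \<in> carrier_mat (rk Y i) (rk Y (i+1))" for i using hc[of "i+1"] by simp
  have kc1: "k (i+1) \<in> carrier_mat (rk Y i) (rk Y (i+1))" for i using kc[of "i+1"] by simp
  note D = cpx_d[OF Y] and D' = cpx_d'[OF Y]
  show ?thesis unfolding null_homotopic_def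
  proof (intro exI[of _ "\<lambda>i. h i + k i"] allI conjI)
    fix i
    show "is_hom (idm Y i) (idm Y (i - 1)) (h i + k i)" by (rule hom_add[OF Y hh kk])
    have "dif Y (i - 1) * (h i + k i) + (h (i + 1) + k (i + 1)) * dif Y i
      = (dif Y (i - 1) * h i + dif Y (i - 1) * k i) + (h (i + 1) * dif Y i + k (i + 1) * dif Y i)"
      using mult_add_distrib_mat[OF D' hc kc] add_mult_distrib_mat[OF hc1 kc1 D] by simp
    also have "\<dots> = f i + g i" unfolding fe ge
      by (rule add4[OF mult_carrier_mat[OF D' hc] mult_carrier_mat[OF D' kc] mult_carrier_mat[OF hc1 D] mult_carrier_mat[OF kc1 D]])
    finally show "f i + g i = dif Y (i - 1) * (h i + k i) + (h (i + 1) + k (i + 1)) * dif Y i" by simp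
  qed
qed

lemma null_left: assumes Y: "is_cpx Y" and c: "chain_map Y Y c" and n: "null_homotopic Y Y f"
  shows "null_homotopic Y Y (\<lambda>i. c i * f i)"
proof -
  obtain h where hh: "\<And>i. is_hom (idm Y i) (idm Y (i-1)) (h i)"
    and fe: "\<And>i. f i = dif Y (i-1) * h i + h (i+1) * dif Y i"
    using n unfolding null_homotopic_def by blast
  have cc: "is_hom (idm Y j) (idm Y j) (c j)" for j using c unfolding chain_map_def by auto
  have cd: "c i * dif Y (i-1) = dif Y (i-1) * c (i-1)" for i
    using c unfolding chain_map_def by (metis diff_add_cancel)
  have hc: "h i \<in> carrier_mat (rk Y (i-1)) (rk Y i)" for i using endo_hom(1)[OF Y hh] .
  have hc1: "h (i+1) \<in> carrier_mat (rk Y i) (rk Y (i+1))" for i using hc[of "i+1"] by simp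
  have C: "c i \<in> carrier_mat (rk Y i) (rk Y i)" for i using endo_hom(1)[OF Y cc] .
  note D = cpx_d[OF Y] and D' = cpx_d'[OF Y]
  show ?thesis unfolding null_homotopic_def
  proof (intro exI[of _ "\<lambda>i. c (i-1) * h i"] allI conjI)
    fix i
    show "is_hom (idm Y i) (idm Y (i - 1)) (c (i-1) * h i)" by (rule hom_mult[OF Y cc hh])
    have "c i * f i = c i * (dif Y (i-1) * h i) + c i * (h (i+1) * dif Y i)"
      unfolding fe by (rule mult_add_distrib_mat[OF C mult_carrier_mat[OF D' hc] mult_carrier_mat[OF hc1 D]])
    also have "c i * (dif Y (i-1) * h i) = dif Y (i-1) * (c (i-1) * h i)"
      using assoc_mult_mat[OF C D' hc, symmetric] cd[of i] assoc_mult_mat[OF D' C hc] by simp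
    also have "c i * (h (i+1) * dif Y i) = (c (i+1-1) * h (i+1)) * dif Y i"
      using assoc_mult_mat[OF C hc1 D, symmetric] by simp
    finally show "c i * f i = dif Y (i - 1) * (c (i-1) * h i) + c (i + 1 - 1) * h (i + 1) * dif Y i" .
  qed
qed

inductive_set ipow :: "'b::ring_1 set \<Rightarrow> nat \<Rightarrow> 'b set" for I :: "'b set" and k :: nat where
  gen: "set xs \<subseteq> I \<Longrightarrow> length xs = k \<Longrightarrow> prod_list xs \<in> ipow I k"
| zero: "0 \<in> ipow I k"
| add: "x \<in> ipow I k \<Longrightarrow> y \<in> ipow I k \<Longrightarrow> x + y \<in> ipow I k"
| neg: "x \<in> ipow I k \<Longrightarrow> -x \<in> ipow I k"

lemma ipow_mult: assumes "x \<in> ipow I a" "y \<in> ipow I b" shows "x * y \<in> ipow I (a+b)"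
  using assms(1)
proof (induction x rule: ipow.induct)
  case (gen xs)
  show ?case using assms(2)
  proof (induction y rule: ipow.induct)
    case (gen ys)
    then have "prod_list (xs @ ys) \<in> ipow I (a+b)" using \<open>set xs \<subseteq> I\<close> \<open>length xs = a\<close>
      by (intro ipow.gen) auto
    then show ?case by simp
  next
    case zero then show ?case by (simp add: ipow.zero)
  next
    case (add x y) then show ?case by (simp add: distrib_left ipow.add)
  next
    case (neg x) then show ?case by (simp add: ipow.neg)
  qed
next
  case zero then show ?case by (simp add: ipow.zero)
next
  case (add x y) then show ?case by (simp add: distrib_right ipow.add)
next
  case (neg x) then show ?case by (simp add: ipow.neg)
qed

lemma ipow_sum: "(\<And>x. x \<in> S \<Longrightarrow> f x \<in> ipow I k) \<Longrightarrow> sum f S \<in> ipow I k"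
  by (induction S rule: infinite_finite_induct) (auto intro: ipow.zero ipow.add)

lemma ipow_one: "x \<in> I \<Longrightarrow> x \<in> ipow I 1"
  using ipow.gen[of "[x]" I 1] by simp

lemma ipow_nil: assumes "\<forall>xs. length xs = N \<longrightarrow> set xs \<subseteq> I \<longrightarrow> prod_list xs = 0" "x \<in> ipow I N"
  shows "x = 0"
  using assms(2) by (induction x rule: ipow.induct) (use assms(1) in auto)

definition ent_in :: "'b set \<Rightarrow> 'b mat \<Rightarrow> bool" where
  "ent_in S M \<longleftrightarrow> (\<forall>i<dim_row M. \<forall>j<dim_col M. M $$ (i,j) \<in> S)"

lemma ent_mult: assumes "ent_in (ipow I a) A" "ent_in (ipow I b) B" "dim_col A = dim_row B"
  shows "ent_in (ipow I (a+b)) (A*B)"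
  unfolding ent_in_def
proof (intro allI impI)
  fix i j assume ij: "i < dim_row (A*B)" "j < dim_col (A*B)"
  have "(A*B) $$ (i,j) = (\<Sum>l\<in>{0..<dim_row B}. A $$ (i,l) * B $$ (l,j))"
    using ij assms(3) by (simp add: scalar_prod_def)
  also have "\<dots> \<in> ipow I (a+b)"
    using ij assms by (intro ipow_sum ipow_mult) (auto simp: ent_in_def)
  finally show "(A*B) $$ (i,j) \<in> ipow I (a+b)" .
qed

primrec pw :: "(int \<Rightarrow> 'b::ring_1 mat) \<Rightarrow> nat \<Rightarrow> int \<Rightarrow> 'b mat" where
  "pw n 0 i = n i"
| "pw n (Suc k) i = pw n k i * n i"

lemma map_map_mat: assumes "\<And>a. \<pi> (\<iota> a) = a" shows "map_mat \<pi> (map_mat \<iota> M) = M"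
  by (intro eq_matI) (auto simp: assms)

lemma lift_contr: assumes Y: "is_cpx Y" and rp: "rh \<pi>" and ri: "rh \<iota>" and pi: "\<And>a. \<pi> (\<iota> a) = a"
  and nil: "nilpotent_ideal {x. \<pi> x = 0}" and c: "contractible (tensor_cpx \<pi> Y)"
  shows "contractible Y"
proof -
  define I where "I = {x. \<pi> x = 0}"
  note E = cpx_e[OF Y] and D = cpx_d[OF Y] and D' = cpx_d'[OF Y]
  obtain hb where hbh: "\<And>i. is_hom (map_mat \<pi> (idm Y i)) (map_mat \<pi> (idm Y (i-1))) (hb i)"
    and hbe: "\<And>i. map_mat \<pi> (idm Y i) = map_mat \<pi> (dif Y (i-1)) * hb i + hb (i+1) * map_mat \<pi> (dif Y i)"
    using c unfolding contractible_def null_homotopic_def cpx_id_def tensor_simps by blast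
  have hbc: "hb i \<in> carrier_mat (rk Y (i-1)) (rk Y i)" for i
    by (rule hom_car[OF hbh]) (use E in auto)
  define h where "h i = idm Y (i-1) * map_mat \<iota> (hb i) * idm Y i" for i
  have Mc: "map_mat \<iota> (hb i) \<in> carrier_mat (rk Y (i-1)) (rk Y i)" for i using hbc[of i] by simp
  have hc: "h i \<in> carrier_mat (rk Y (i-1)) (rk Y i)" for i
    unfolding h_def using E Mc by (meson mult_carrier_mat)
  have hh: "is_hom (idm Y i) (idm Y (i-1)) (h i)" for i
  proof (rule hom_intro[OF hc _ _ E E])
    let ?M = "map_mat \<iota> (hb i)"
    have "idm Y (i-1) * h i = (idm Y (i-1) * idm Y (i-1)) * ?M * idm Y i"
      unfolding h_def using assoc_mult_mat[OF E E Mc[of i]] assoc_mult_mat[OF E mult_carrier_mat[OF E Mc[of i]] E]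
      by simp
    then show "idm Y (i-1) * h i = h i" unfolding h_def using cpx_ee[OF Y] by simp
    have "h i * idm Y i = idm Y (i-1) * ?M * (idm Y i * idm Y i)"
      unfolding h_def using assoc_mult_mat[OF mult_carrier_mat[OF E Mc[of i]] E E] by simp
    then show "h i * idm Y i = h i" unfolding h_def using cpx_ee[OF Y] by simp
  qed
  have ph: "map_mat \<pi> (h i) = hb i" for i
  proof -
    have "map_mat \<pi> (h i) = map_mat \<pi> (idm Y (i-1)) * hb i * map_mat \<pi> (idm Y i)"
      unfolding h_def
      using map_mat_mult[OF rp, of "idm Y (i-1) * map_mat \<iota> (hb i)" "idm Y i"]
        map_mat_mult[OF rp, of "idm Y (i-1)" "map_mat \<iota> (hb i)"]
        E[of i] E[of "i-1"] Mc[of i] map_map_mat[of \<pi> \<iota>, OF pi]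
      by (simp add: carrier_matD)
    then show ?thesis using hbh[of i] unfolding is_hom_def by simp
  qed
  define u where "u i = dif Y (i-1) * h i + h (i+1) * dif Y i" for i
  have nu: "null_homotopic Y Y u" unfolding null_homotopic_def u_def using hh by blast
  have uc: "chain_map Y Y u" by (rule null_chain[OF Y nu])
  have uC: "u i \<in> carrier_mat (rk Y i) (rk Y i)" for i
    using endo_hom(1)[OF Y] uc unfolding chain_map_def by blast
  define n where "n i = idm Y i - u i" for i
  have nc: "chain_map Y Y n"
    using chain_diff[OF Y chain_id[OF Y] uc] unfolding n_def cpx_id_def .
  have nC: "n i \<in> carrier_mat (rk Y i) (rk Y i)" for i
    unfolding n_def using uC by (simp add: minus_carrier_mat)
  have hc1: "h (i+1) \<in> carrier_mat (rk Y i) (rk Y (i+1))" for i using hc[of "i+1"] by simp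
  have pu: "map_mat \<pi> (u i) = map_mat \<pi> (idm Y i)" for i
    unfolding u_def hbe[of i] using D'[of i] hc[of i] hc1[of i] D[of i]
    by (simp add: map_mat_mult[OF rp] map_mat_add[OF rp] carrier_matD ph)
  have pn: "map_mat \<pi> (n i) = 0\<^sub>m (rk Y i) (rk Y i)" for i
    unfolding n_def using E[of i] uC[of i]
    by (simp add: map_mat_minus[OF rp] carrier_matD pu)
  have nI: "ent_in (ipow I 1) (n i)" for i
    unfolding ent_in_def
  proof (intro allI impI)
    fix j k assume "j < dim_row (n i)" "k < dim_col (n i)"
    then have "\<pi> (n i $$ (j,k)) = map_mat \<pi> (n i) $$ (j,k)" by simp
    also have "\<dots> = 0" using pn[of i] \<open>j < dim_row (n i)\<close> \<open>k < dim_col (n i)\<close> nC[of i] by simp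
    finally show "n i $$ (j,k) \<in> ipow I 1" by (intro ipow_one) (simp add: I_def)
  qed
  have pwc: "chain_map Y Y (pw n k)" for k
  proof (induction k)
    case 0 then show ?case using nc by (simp add: fun_eq_iff[symmetric])
  next
    case (Suc k)
    have "(\<lambda>i. pw n (Suc k) i) = (\<lambda>i. pw n k i * n i)" by simp
    then show ?case using chain_comp[OF Y Suc nc] by (metis eta_contract_eq)
  qed
  have pwC: "pw n k i \<in> carrier_mat (rk Y i) (rk Y i)" for k i
    using endo_hom(1)[OF Y] pwc[of k] unfolding chain_map_def by blast
  have pwI: "ent_in (ipow I (Suc k)) (pw n k i)" for k i
  proof (induction k)
    case 0 then show ?case using nI by simp
  next
    case (Suc k)
    show ?case using ent_mult[OF Suc nI[of i]] pwC[of k i] nC[of i] by (simp add: carrier_matD)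
  qed
  have npw: "null_homotopic Y Y (\<lambda>i. idm Y i - pw n k i)" for k
  proof (induction k)
    case 0
    have "(\<lambda>i. idm Y i - pw n 0 i) = u"
      using E uC unfolding n_def by (auto intro!: ext eq_matI)
    then show ?case using nu by simp
  next
    case (Suc k)
    have "null_homotopic Y Y (\<lambda>i. (idm Y i - pw n k i) + pw n k i * u i)"
      by (rule null_add[OF Y Suc null_left[OF Y pwc nu]])
    moreover have "(idm Y i - pw n k i) + pw n k i * u i = idm Y i - pw n (Suc k) i" for i
    proof -
      have pe: "pw n k i * idm Y i = pw n k i"
        using endo_hom(3)[OF Y] pwc[of k] unfolding chain_map_def by blast
      have "pw n (Suc k) i = pw n k i - pw n k i * u i"
        using mult_minus_distrib_mat[OF pwC E uC] pe unfolding n_def by simp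
      then show ?thesis using E[of i] pwC[of k i] mult_carrier_mat[OF pwC[of k i] uC[of i]]
        by (auto intro!: eq_matI)
    qed
    ultimately show ?case by simp
  qed
  obtain N where N: "N > 0" "\<forall>xs. length xs = N \<longrightarrow> set xs \<subseteq> I \<longrightarrow> prod_list xs = 0"
    using nil unfolding nilpotent_ideal_def I_def by blast
  have z: "pw n (N-1) i = 0\<^sub>m (rk Y i) (rk Y i)" for i
  proof (rule eq_matI)
    fix j k assume "j < dim_row (0\<^sub>m (rk Y i) (rk Y i))" "k < dim_col (0\<^sub>m (rk Y i) (rk Y i))"
    then have "pw n (N-1) i $$ (j,k) \<in> ipow I N"
      using pwI[of "N-1" i] pwC[of "N-1" i] N(1) unfolding ent_in_def by auto
    then show "pw n (N-1) i $$ (j,k) = 0\<^sub>m (rk Y i) (rk Y i) $$ (j,k)"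
      using ipow_nil[OF N(2)] \<open>j < _\<close> \<open>k < _\<close> by simp
  qed (use pwC in auto)
  have "(\<lambda>i. idm Y i - pw n (N-1) i) = cpx_id Y"
  proof (rule ext)
    fix i
    show "idm Y i - pw n (N-1) i = cpx_id Y i"
      unfolding z cpx_id_def using carrier_matD[OF E[of i]] by (intro eq_matI) auto
  qed
  then show ?thesis using npw[of "N-1"] unfolding contractible_def by simp
qed

lemma alg_rh: "alg_hom s t f \<Longrightarrow> rh f"
  unfolding alg_hom_def rh_def by blast

theorem mainTheorem3:
  fixes sA :: "'k::field \<Rightarrow> 'a::ring_1 \<Rightarrow> 'a"
    and sL :: "'k \<Rightarrow> 'b::ring_1 \<Rightarrow> 'b"
    and \<pi> :: "'b \<Rightarrow> 'a" and \<iota> :: "'a \<Rightarrow> 'b"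
    and X :: "'a cpx"
  assumes "fd_algebra sA" and "fd_algebra sL"
    and "split_by_nilpotent sA sL \<pi> \<iota>"
    and "is_cpx X" and "indecomposable X"
  shows "indecomposable (tensor_cpx \<iota> X)"
proof -
  have rp: "rh \<pi>" and ri: "rh \<iota>" and pi: "\<And>a. \<pi> (\<iota> a) = a" and nil: "nilpotent_ideal {x. \<pi> x = 0}"
    using assms(3) alg_rh unfolding split_by_nilpotent_def by blast+
  have dX: "dims_ok X" by (rule cpx_dims[OF assms(4)])
  have dT: "dims_ok (tensor_cpx \<iota> X)" by (rule dims_ok_tensor[OF dX])
  have bk: "tensor_cpx \<pi> (tensor_cpx \<iota> X) = X" by (rule map_map_id[of \<pi> \<iota>, OF pi])
  have nc: "\<not> contractible X" and dec: "\<And>Y Z. is_cpx Y \<Longrightarrow> is_cpx Z \<Longrightarrow> htpy_equiv X (dsum Y Z) \<Longrightarrow> contractible Y \<or> contractible Z"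
    using assms(5) unfolding indecomposable_def by blast+
  show ?thesis unfolding indecomposable_def
  proof (intro conjI allI impI)
    show "\<not> contractible (tensor_cpx \<iota> X)"
      using map_contr[OF rp dT] bk nc by metis
  next
    fix Y Z :: "'b cpx"
    assume Y: "is_cpx Y" and Z: "is_cpx Z" and he: "htpy_equiv (tensor_cpx \<iota> X) (dsum Y Z)"
    have dS: "dims_ok (dsum Y Z)" by (rule dims_ok_dsum[OF cpx_dims[OF Y] cpx_dims[OF Z]])
    have "htpy_equiv X (dsum (tensor_cpx \<pi> Y) (tensor_cpx \<pi> Z))"
      using map_htpy[OF rp dT dS he] bk map_dsum[OF rp cpx_dims[OF Y] cpx_dims[OF Z]] by simp
    then have "contractible (tensor_cpx \<pi> Y) \<or> contractible (tensor_cpx \<pi> Z)"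
      using dec map_is_cpx[OF rp Y] map_is_cpx[OF rp Z] by blast
    then show "contractible Y \<or> contractible Z"
      using lift_contr[OF Y rp ri pi nil] lift_contr[OF Z rp ri pi nil] by blast
  qed
qed

end
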